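(* Let $0<\rho_{\max}$ and $0<w_{\min}\le w_{\max}$, and let $V:[0,\rho_{\max})\times[w_{\min},w_{\max}]\to\mathbb{R}$, $(\rho,w)\mapsto V(\rho,w)$, be a $C^2$ function such that the generalized flow rate $Q(\rho,w)=\rho\,V(\rho,w)$ satisfies $\frac{\partial^2 Q}{\partial\rho^2}(\rho,w)<0$ for all $(\rho,w)$ in the domain. Define the characteristic velocities $$\lambda^{(1)}(\rho,w)=V(\rho,w)+\rho\,\frac{\partial V}{\partial\rho}(\rho,w),\qquad \lambda^{(2)}(\rho,w)=V(\rho,w).$$ Then for all $(\rho,w)$ in the domain, $\frac{\partial\lambda^{(1)}}{\partial\rho}(\rho,w)<0$ and $\frac{\partial\lambda^{(2)}}{\partial\rho}(\rho,w)<0$, where the partial derivatives in $\rho$ are taken with $w$ held fixed.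
   Context: This concerns the generalized Aw-Rascle-Zhang (GARZ) traffic model $\rho_t+(\rho u)_x=0$, $w_t+u w_x=0$ with $u=V(\rho,w)$, where $\rho$ is the vehicle density, $w$ the empty road velocity and $V$ the generalized velocity function. Written in conservative variables $(\rho,q)$ with $q=\rho w$, the flux is $(u\rho,uq)$, and the eigenvalues of its Jacobian are $\lambda^{(1)}=u+\rho\,\partial V/\partial\rho$ and $\lambda^{(2)}=u$, with $\partial V/\partial\rho$ computed at fixed $w$. *)

theory Defs
  imports "HOL-Analysis.Analysis"
begin

definition C2_on :: "(real \<times> real) set \<Rightarrow> (real \<times> real \<Rightarrow> real) \<Rightarrow> bool" where
  "C2_on D f \<longleftrightarrow>
     (\<exists>f' :: real \<times> real \<Rightarrow> ((real \<times> real) \<Rightarrow>\<^sub>L real).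
      \<exists>f'' :: real \<times> real \<Rightarrow> ((real \<times> real) \<Rightarrow>\<^sub>L ((real \<times> real) \<Rightarrow>\<^sub>L real)).
        (\<forall>p\<in>D. (f has_derivative blinfun_apply (f' p)) (at p within D)) \<and>
        continuous_on D f' \<and>
        (\<forall>p\<in>D. (f' has_derivative blinfun_apply (f'' p)) (at p within D)) \<and>
        continuous_on D f'')"

definition d_rho :: "(real \<times> real) set \<Rightarrow> (real \<times> real \<Rightarrow> real) \<Rightarrow> real \<times> real \<Rightarrow> real" where
  "d_rho D g p = (THE d. ((\<lambda>s. g (s, snd p)) has_real_derivative d)
                         (at (fst p) within {s. (s, snd p) \<in> D}))"

end

theory Submission
  imports Defs
begin


lemma slice_deriv:
  fixes g :: "real \<times> real \<Rightarrow> real"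
  assumes "\<And>p. p \<in> D \<Longrightarrow> (g has_derivative g' p) (at p within D)"
    and "(\<lambda>t. (t,w)) ` S \<subseteq> D" "t \<in> S" "linear (g' (t,w))"
  shows "((\<lambda>t. g (t,w)) has_real_derivative g' (t,w) (1,0)) (at t within S)"
proof -
  have pd: "((\<lambda>t. (t,w)) has_derivative (\<lambda>h. (h,0))) (at t within S)"
    by (auto intro!: derivative_eq_intros)
  have "((\<lambda>t. g (t,w)) has_derivative (\<lambda>h. g' (t,w) (h,0))) (at t within S)"
    using has_derivative_in_compose2[OF assms(1) assms(2) assms(3) pd] by simp
  moreover have "(\<lambda>h. g' (t,w) (h,0)) = (\<lambda>h. g' (t,w) (1,0) * h)"
  proof
    fix h :: real
    have "(h,0) = h *\<^sub>R ((1::real),(0::real))" by simp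
    then show "g' (t,w) (h,0) = g' (t,w) (1,0) * h"
      using linear_scale[OF assms(4)] by (metis real_scaleR_def mult.commute)
  qed
  ultimately show ?thesis by (simp add: has_field_derivative_def)
qed

lemma uniq:
  fixes a b s d :: real
  assumes "a < b" "s \<in> {a..<b}" "(f has_real_derivative d) (at s within {a..<b})"
  shows "(THE d. (f has_real_derivative d) (at s within {a..<b})) = d"
proof (rule the_equality)
  show "(f has_real_derivative d) (at s within {a..<b})" by (rule assms(3))
next
  fix d' assume d': "(f has_real_derivative d') (at s within {a..<b})"
  have nb: "at s within {a..<b} \<noteq> bot"
    using assms(1,2) by (simp add: trivial_limit_within islimpt_Ico)
  show "d' = d"
    using vector_derivative_unique_within[OF nb] d' assms(3)
    by (metis has_real_derivative_iff_has_vector_derivative)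
qed

theorem lemma2:
  fixes rho_max w_min w_max :: real
    and V :: "real \<times> real \<Rightarrow> real"
  defines "D \<equiv> {0..<rho_max} \<times> {w_min..w_max}"
  defines "Q \<equiv> (\<lambda>p. fst p * V p)"
  defines "lam1 \<equiv> (\<lambda>p. V p + fst p * d_rho D V p)"
  defines "lam2 \<equiv> V"
  assumes "0 < rho_max" and "0 < w_min" and "w_min \<le> w_max"
    and "C2_on D V"
    and "\<forall>p\<in>D. d_rho D (d_rho D Q) p < 0"
  shows "\<forall>p\<in>D. d_rho D lam1 p < 0 \<and> d_rho D lam2 p < 0"
proof
  fix p assume pD: "p \<in> D"
  obtain s w where p: "p = (s,w)" by (cases p)
  define S where "S = {0..<rho_max}"
  have sS: "s \<in> S" and w: "w \<in> {w_min..w_max}" using pD p by (auto simp: D_def S_def)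
  have slice: "{t. (t, w) \<in> D} = S" using w by (auto simp: D_def S_def)
  have img: "(\<lambda>t. (t,w)) ` S \<subseteq> D" using w by (auto simp: D_def S_def)
  have dr: "d_rho D g (t,w) = (THE d. ((\<lambda>t. g (t,w)) has_real_derivative d) (at t within S))"
    for g t by (simp add: d_rho_def slice)
  have un: "t \<in> S \<Longrightarrow> ((\<lambda>t. g (t,w)) has_real_derivative d) (at t within S) \<Longrightarrow> d_rho D g (t,w) = d"
    for g t d unfolding dr S_def using uniq[OF assms(5)] by blast
  obtain f' :: "real \<times> real \<Rightarrow> ((real \<times> real) \<Rightarrow>\<^sub>L real)"
    and f'' :: "real \<times> real \<Rightarrow> ((real \<times> real) \<Rightarrow>\<^sub>L ((real \<times> real) \<Rightarrow>\<^sub>L real))"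
    where f1: "\<And>p. p\<in>D \<Longrightarrow> (V has_derivative blinfun_apply (f' p)) (at p within D)"
      and f2: "\<And>p. p\<in>D \<Longrightarrow> (f' has_derivative blinfun_apply (f'' p)) (at p within D)"
    using assms(8) unfolding C2_on_def by blast
  define e where "e = ((1::real),(0::real))"
  define v where "v = (\<lambda>t. V (t,w))"
  define v1 where "v1 = (\<lambda>t. f' (t,w) e)"
  define v2 where "v2 t = f'' (t,w) e e" for t
  have D1: "(v has_real_derivative v1 t) (at t within S)" if "t \<in> S" for t
    using slice_deriv[of D V "\<lambda>p. blinfun_apply (f' p)", OF f1 img that bounded_linear.linear[OF blinfun.bounded_linear_right]]
    by (simp add: v_def v1_def e_def)
  have f2': "((\<lambda>p. f' p e) has_derivative (\<lambda>h. f'' p h e)) (at p within D)" if "p \<in> D" for p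
    using bounded_linear.has_derivative[OF blinfun.bounded_linear_left f2[OF that]] .
  have lin: "linear (\<lambda>h. f'' q h e)" for q
    by (intro bounded_linear.linear bounded_linear_intros blinfun.bounded_linear_left)
  have D2: "(v1 has_real_derivative v2 t) (at t within S)" if "t \<in> S" for t
    using slice_deriv[of D "\<lambda>p. f' p e" "\<lambda>p h. f'' p h e", OF f2' img that lin]
    by (simp add: v1_def v2_def e_def)
  have dV: "d_rho D V (t,w) = v1 t" if "t \<in> S" for t
    using un[OF that D1[OF that, unfolded v_def]] .
  have dQ: "d_rho D Q (t,w) = v t + t * v1 t" if "t \<in> S" for t
  proof -
    have "((\<lambda>t. t * v t) has_real_derivative (t * v1 t + 1 * v t)) (at t within S)"
      by (rule DERIV_mult'[OF DERIV_ident D1[OF that]])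
    then have "((\<lambda>t. Q (t,w)) has_real_derivative (v t + t * v1 t)) (at t within S)"
      by (simp add: Q_def v_def add.commute)
    then show ?thesis using un[OF that, of Q] by simp
  qed
  have H: "((\<lambda>t. v t + t * v1 t) has_real_derivative (2 * v1 t + t * v2 t)) (at t within S)"
    if "t \<in> S" for t
    using DERIV_add[OF D1[OF that] DERIV_mult'[OF DERIV_ident D2[OF that]]] by simp
  have dQQ: "d_rho D (d_rho D Q) (t,w) = 2 * v1 t + t * v2 t" if "t \<in> S" for t
  proof -
    have "((\<lambda>t. d_rho D Q (t,w)) has_real_derivative (2 * v1 t + t * v2 t)) (at t within S)"
      using has_derivative_transform[of t S "\<lambda>t. d_rho D Q (t,w)" "\<lambda>t. v t + t * v1 t"] H[OF that] that dQ
      by (simp add: has_field_derivative_def)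
    then show ?thesis using un[OF that] by simp
  qed
  have neg: "2 * v1 t + t * v2 t < 0" if "t \<in> S" for t
  proof -
    have "(t,w) \<in> D" using img that by blast
    then show ?thesis using assms(9) dQQ[OF that] by fastforce
  qed
  have dL1: "d_rho D lam1 (s,w) = 2 * v1 s + s * v2 s"
  proof -
    have "((\<lambda>t. lam1 (t,w)) has_real_derivative (2 * v1 s + s * v2 s)) (at s within S)"
      using has_derivative_transform[of s S "\<lambda>t. lam1 (t,w)" "\<lambda>t. v t + t * v1 t"] H[OF sS] sS dV
      by (simp add: has_field_derivative_def lam1_def v_def)
    then show ?thesis using un[OF sS] by simp
  qed
  have v1neg: "v1 s < 0"
  proof (cases "s = 0")
    case True then show ?thesis using neg[OF sS] by simp
  next
    case False
    then have s0: "0 < s" using sS by (simp add: S_def)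
    define g where "g t = t\<^sup>2 * v1 t" for t
    have G: "(g has_real_derivative (2 * t * v1 t + t\<^sup>2 * v2 t)) (at t within S)" if "t \<in> S" for t
      unfolding g_def using DERIV_mult'[OF DERIV_pow[of 2 t S] D2[OF that]]
      by (simp add: power2_eq_square algebra_simps)
    have "g s < g 0"
    proof (rule DERIV_neg_imp_decreasing_open[OF s0])
      fix x assume x: "0 < x" "x < s"
      then have xS: "x \<in> S" using sS by (auto simp: S_def)
      have "x \<in> {0<..<rho_max}" using x sS by (auto simp: S_def)
      then have "(g has_real_derivative (2 * x * v1 x + x\<^sup>2 * v2 x)) (at x)"
        using DERIV_subset[OF G[OF xS], of "{0<..<rho_max}"] at_within_open[of x "{0<..<rho_max}"]
        by (auto simp: S_def subset_eq)
      moreover have "2 * x * v1 x + x\<^sup>2 * v2 x = x * (2 * v1 x + x * v2 x)"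
        by (simp add: power2_eq_square algebra_simps)
      moreover have "x * (2 * v1 x + x * v2 x) < 0"
        using neg[OF xS] x by (simp add: mult_pos_neg)
      ultimately show "\<exists>y. (g has_real_derivative y) (at x) \<and> y < 0" by auto
    next
      have "continuous_on S g"
        using G DERIV_continuous continuous_on_eq_continuous_within by blast
      moreover have "{0..s} \<subseteq> S" using sS by (auto simp: S_def)
      ultimately show "continuous_on {0..s} g" using continuous_on_subset by blast
    qed
    then have "s\<^sup>2 * v1 s < 0" by (simp add: g_def)
    then show ?thesis using s0 by (simp add: mult_less_0_iff)
  qed
  show "d_rho D lam1 p < 0 \<and> d_rho D lam2 p < 0"
    using p dL1 neg[OF sS] dV[OF sS] v1neg by (simp add: lam2_def)
qed

end
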